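(* Let $(\Omega,Z)$, with $\Omega:[0,1]\times[t_0,\infty)\to\mathbb{R}^2$ and $Z:[t_0,\infty)\to\mathbb{R}^n$, be a (classical) solution of the target system \begin{align*} \partial_t \Omega(x,t) &= E\,\partial_x^2 \Omega(x,t), && x\in(0,1),\\ \dot Z(t) &= (A+B\Gamma_0)Z(t) + B\Theta\,\Omega(0,t),\\ \alpha\,\partial_x\Omega(0,t) &= -\beta\,\Omega(0,t),\\ \Omega(1,t) &= 0 . \end{align*} Then the trivial solution $(\Omega,Z)\equiv 0$ is exponentially stable in the $L^2\times\mathbb{R}^n$ norm: there exist constants $\Pi,\mu>0$, independent of the solution, such that for all $t\ge t_0$ $$\|(\Omega(\cdot,t),Z(t))\|\le \Pi\, e^{-\mu(t-t_0)}\,\|(\Omega(\cdot,t_0),Z(t_0))\|.$$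
   Context: Fix $\varepsilon>0$ and $y_0\in(-1,0)$. Set $\varepsilon_1=\varepsilon/(1+y_0)^2$, $\varepsilon_2=\varepsilon/(1-y_0)^2$ (so $\varepsilon_1>\varepsilon_2>0$), $a=(1+y_0)/(1-y_0)\in(0,1)$, $E=\mathrm{diag}(\varepsilon_1,\varepsilon_2)$, $\alpha=\begin{pmatrix}1&a\\0&0\end{pmatrix}$, $\beta=\begin{pmatrix}0&0\\1&-1\end{pmatrix}$, and $\Theta=(\theta,\ 1-\theta)$ for a fixed $\theta\in[0,1]$. Thus the boundary condition at $x=0$ means $\partial_x\Omega_1(0,t)+a\,\partial_x\Omega_2(0,t)=0$ and $\Omega_1(0,t)=\Omega_2(0,t)$. $A\in\mathbb{R}^{n\times n}$, $B\in\mathbb{R}^{n\times 1}$, and $\Gamma_0\in\mathbb{R}^{1\times n}$ is such that $A+B\Gamma_0$ is Hurwitz. For $f\in L^2(0,1;\mathbb{R}^2)$ and $v\in\mathbb{R}^n$, $\|(f,v)\|=\big(\|f\|_{L^2}^2+|v|_2^2\big)^{1/2}$ with $\|f\|_{L^2}^2=\int_0^1|f(x)|_2^2dx$. *)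

theory Defs
  imports "HOL-Analysis.Analysis"
begin

definition hurwitz :: "real^'n^'n \<Rightarrow> bool" where
  "hurwitz M \<longleftrightarrow>
     (\<forall>(lam::complex) (v::complex^'n). v \<noteq> 0 \<and>
        (\<chi> i j. complex_of_real (M $ i $ j)) *v v = lam *s v \<longrightarrow> Re lam < 0)"

definition outer :: "real^'n \<Rightarrow> real^'n \<Rightarrow> real^'n^'n" where
  "outer b g = (\<chi> i j. b $ i * g $ j)"

text \<open>Classical solution (Omega = (Om1, Om2), Z) of the target system on [0,1] x [t0, infinity),
  with E = diag(eps/(1+y0)^2, eps/(1-y0)^2), a = (1+y0)/(1-y0), Theta = (theta, 1-theta).
  Om1x, Om2x, Om1xx, Om2xx, Om1t, Om2t are the partial derivatives
  (one-sided in x at the endpoints x = 0, 1).\<close>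
definition target_solution ::
  "real \<Rightarrow> real \<Rightarrow> real \<Rightarrow> real^'n^'n \<Rightarrow> real^'n \<Rightarrow> real^'n \<Rightarrow> real \<Rightarrow>
   (real \<Rightarrow> real \<Rightarrow> real) \<Rightarrow> (real \<Rightarrow> real \<Rightarrow> real) \<Rightarrow> (real \<Rightarrow> real^'n) \<Rightarrow> bool" where
  "target_solution eps y0 theta A B Gamma0 t0 Om1 Om2 Z \<longleftrightarrow>
    (let eps1 = eps / (1 + y0)^2; eps2 = eps / (1 - y0)^2; a = (1 + y0) / (1 - y0) in
     continuous_on ({0..1} \<times> {t0..}) (\<lambda>(x,t). Om1 x t) \<and>
     continuous_on ({0..1} \<times> {t0..}) (\<lambda>(x,t). Om2 x t) \<and>
     (\<exists>Om1x Om2x Om1xx Om2xx Om1t Om2t.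
        (\<forall>x\<in>{0..1}. \<forall>t>t0.
            ((\<lambda>y. Om1 y t) has_real_derivative Om1x x t) (at x within {0..1}) \<and>
            ((\<lambda>y. Om2 y t) has_real_derivative Om2x x t) (at x within {0..1}) \<and>
            ((\<lambda>y. Om1x y t) has_real_derivative Om1xx x t) (at x within {0..1}) \<and>
            ((\<lambda>y. Om2x y t) has_real_derivative Om2xx x t) (at x within {0..1}) \<and>
            ((\<lambda>s. Om1 x s) has_real_derivative Om1t x t) (at t) \<and>
            ((\<lambda>s. Om2 x s) has_real_derivative Om2t x t) (at t)) \<and>
        continuous_on ({0..1} \<times> {t0<..}) (\<lambda>(x,t). Om1x x t) \<and>
        continuous_on ({0..1} \<times> {t0<..}) (\<lambda>(x,t). Om2x x t) \<and>
        continuous_on ({0..1} \<times> {t0<..}) (\<lambda>(x,t). Om1xx x t) \<and>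
        continuous_on ({0..1} \<times> {t0<..}) (\<lambda>(x,t). Om2xx x t) \<and>
        continuous_on ({0..1} \<times> {t0<..}) (\<lambda>(x,t). Om1t x t) \<and>
        continuous_on ({0..1} \<times> {t0<..}) (\<lambda>(x,t). Om2t x t) \<and>
        (\<forall>x\<in>{0<..<1}. \<forall>t>t0.
            Om1t x t = eps1 * Om1xx x t \<and> Om2t x t = eps2 * Om2xx x t) \<and>
        (\<forall>t>t0. Om1x 0 t + a * Om2x 0 t = 0 \<and> Om1 0 t = Om2 0 t)) \<and>
     (\<forall>t\<ge>t0. Om1 1 t = 0 \<and> Om2 1 t = 0) \<and>
     (\<forall>t\<ge>t0. (Z has_vector_derivative
         ((A + outer B Gamma0) *v Z t + (theta * Om1 0 t + (1 - theta) * Om2 0 t) *\<^sub>R B))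
         (at t within {t0..})))"

definition state_norm ::
  "(real \<Rightarrow> real \<Rightarrow> real) \<Rightarrow> (real \<Rightarrow> real \<Rightarrow> real) \<Rightarrow> (real \<Rightarrow> real^'n) \<Rightarrow> real \<Rightarrow> real" where
  "state_norm Om1 Om2 Z t =
     sqrt (integral {0..1} (\<lambda>x. (Om1 x t)^2 + (Om2 x t)^2) + (norm (Z t))^2)"

end

theory Submission
  imports Defs "Jordan_Normal_Form.Spectral_Radius"
begin

lemma hurwitz_mat_eig:
  fixes M :: "real^'n^'n" and e :: "nat \<Rightarrow> 'n"
  assumes hw: "hurwitz M" and e: "bij_betw e {0..<CARD('n)} (UNIV::'n set)"
    and ev: "eigenvalue (mat CARD('n) CARD('n) (\<lambda>(i,j). complex_of_real (M $ e i $ e j))) lam"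
  shows "Re lam < 0"
proof -
  define n where "n = CARD('n)"
  define Mc where "Mc = mat n n (\<lambda>(i,j). complex_of_real (M $ e i $ e j))"
  define ix where "ix = inv_into {0..<n} e"
  have e': "bij_betw e {0..<n} UNIV" using e n_def by simp
  have ix1: "ix i < n" "e (ix i) = i" for i
    using bij_betw_inv_into_right[OF e'] bij_betw_inv_into[OF e'] unfolding ix_def
    by (auto simp: bij_betw_def)
  have ix2: "k < n \<Longrightarrow> ix (e k) = k" for k
    using bij_betw_inv_into_left[OF e'] unfolding ix_def by auto
  from ev obtain v where v: "eigenvector Mc v lam" unfolding eigenvalue_def Mc_def n_def by auto
  hence vc: "v \<in> carrier_vec n" and vnz: "v \<noteq> 0\<^sub>v n" and vev: "Mc *\<^sub>v v = lam \<cdot>\<^sub>v v"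
    unfolding eigenvector_def Mc_def by auto
  define w :: "complex^'n" where "w = (\<chi> i. vec_index v ((ix i)))"
  have "w \<noteq> 0"
  proof
    assume w0: "w = 0"
    have "v = 0\<^sub>v n"
    proof (rule eq_vecI)
      fix k assume "k < dim_vec (0\<^sub>v n)"
      hence k: "k < n" by simp
      have "vec_index v k = w $ e k" unfolding w_def using ix2[OF k] by simp
      thus "vec_index v k = vec_index (0\<^sub>v n) k" using w0 k by simp
    qed (use vc in auto)
    with vnz show False by simp
  qed
  moreover have "(\<chi> i j. complex_of_real (M $ i $ j)) *v w = lam *s w"
  proof -
    have "((\<chi> i j. complex_of_real (M $ i $ j)) *v w) $ i = (lam *s w) $ i" for i
    proof -
      have "((\<chi> i j. complex_of_real (M $ i $ j)) *v w) $ i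
          = (\<Sum>j\<in>UNIV. complex_of_real (M $ i $ j) * w $ j)"
        by (simp add: matrix_vector_mult_def)
      also have "\<dots> = (\<Sum>k\<in>{0..<n}. complex_of_real (M $ i $ e k) * w $ e k)"
        by (rule sum.reindex_bij_betw[OF e', symmetric])
      also have "\<dots> = (\<Sum>k\<in>{0..<n}. Mc $$ (ix i, k) * vec_index v (k))"
        by (rule sum.cong, auto simp: Mc_def w_def ix1 ix2)
      also have "\<dots> = vec_index (Mc *\<^sub>v v) (ix i)"
        using ix1 vc by (simp add: Mc_def scalar_prod_def row_def mult_ac)
      also have "\<dots> = lam * vec_index v ((ix i))" using vev ix1 vc by simp
      also have "\<dots> = (lam *s w) $ i" by (simp add: w_def)
      finally show ?thesis .
    qed
    thus ?thesis by (simp add: Finite_Cartesian_Product.vec_eq_iff)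
  qed
  ultimately show ?thesis using hw unfolding hurwitz_def by blast
qed


lemma mat_vec_index_sum:
  assumes "A \<in> carrier_mat n n" "v \<in> carrier_vec n" "i < n"
  shows "vec_index (A *\<^sub>v v) i = (\<Sum>j<n. A $$ (i,j) * vec_index v j)"
  using assms by (auto simp: scalar_prod_def row_def atLeast0LessThan intro!: sum.cong)

lemma hurwitz_discrete_decay:
  fixes M :: "real^'n^'n"
  assumes hw: "hurwitz M"
  shows "\<exists>h C r. h > 0 \<and> 0 < r \<and> r < 1 \<and>
     (\<forall>k x. norm (((\<lambda>y. y + h *\<^sub>R (M *v y)) ^^ k) x) \<le> C * r^k * norm x)"
proof -
  define n where "n = CARD('n)"
  have n0: "n > 0" unfolding n_def by simp
  obtain e where e': "bij_betw e {0..<n} (UNIV::'n set)"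
    using ex_bij_betw_nat_finite[of "UNIV::'n set"] unfolding n_def by auto
  define Mc where "Mc = mat n n (\<lambda>(i,j). complex_of_real (M $ e i $ e j))"
  define ix where "ix = inv_into {0..<n} e"
  have ix1: "ix i < n" "e (ix i) = i" for i
    using bij_betw_inv_into_right[OF e'] bij_betw_inv_into[OF e'] unfolding ix_def
    by (auto simp: bij_betw_def)
  have ix2: "k < n \<Longrightarrow> ix (e k) = k" for k
    using bij_betw_inv_into_left[OF e'] unfolding ix_def by auto
  have Mcc: "Mc \<in> carrier_mat n n" unfolding Mc_def by simp
  have eigneg: "eigenvalue Mc lam \<Longrightarrow> Re lam < 0" for lam
    using hurwitz_mat_eig[OF hw, of e lam] e' unfolding Mc_def n_def by simp
  define S where "S = spectrum Mc"
  have finS: "finite S" using card_finite_spectrum[OF Mcc] S_def by simp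
  have neS: "S \<noteq> {}" using spectrum_non_empty[OF Mcc n0] S_def by simp
  have Sneg: "lam \<in> S \<Longrightarrow> Re lam < 0" for lam using eigneg unfolding S_def spectrum_def by simp
  define d where "d = Min ((\<lambda>l. - Re l) ` S)"
  define R where "R = Max (norm ` S)"
  have d0: "d > 0" unfolding d_def using finS neS Sneg by (subst Min_gr_iff) auto
  have dle: "lam \<in> S \<Longrightarrow> d \<le> - Re lam" for lam unfolding d_def using finS by auto
  have Rge: "lam \<in> S \<Longrightarrow> norm lam \<le> R" for lam unfolding R_def using finS by auto
  obtain l0 where l0: "l0 \<in> S" using neS by auto
  have dR: "d \<le> R"
    using dle[OF l0] Rge[OF l0] abs_Re_le_cmod[of l0] by linarith
  have R0: "R > 0" using d0 dR by linarith
  define h where "h = d / R^2"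
  have h0: "h > 0" unfolding h_def using d0 R0 by simp
  have hd1: "h * d \<le> 1"
  proof -
    have "h * d = (d / R)^2" unfolding h_def by (simp add: power2_eq_square)
    also have "\<dots> \<le> 1" using d0 dR R0 by (simp add: power_le_one)
    finally show ?thesis .
  qed
  define r where "r = sqrt (1 - h * d / 2)"
  have r0: "r > 0" unfolding r_def using hd1 by simp
  have r1: "r < 1" unfolding r_def using h0 d0 by (simp add: mult_pos_pos)
  have r2: "r^2 = 1 - h * d / 2" unfolding r_def using hd1 by simp
  have lamS: "norm (1 + complex_of_real h * lam) < r" if "lam \<in> S" for lam
  proof -
    have nl: "norm lam ^ 2 \<le> R^2" using Rge[OF that] by (simp add: power_mono)
    have "(norm (1 + complex_of_real h * lam))^2 = (1 + h * Re lam)^2 + (h * Im lam)^2"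
      by (simp add: cmod_power2)
    also have "\<dots> = 1 + 2 * h * Re lam + h^2 * ((Re lam)^2 + (Im lam)^2)"
      by (simp add: power2_eq_square algebra_simps)
    also have "\<dots> = 1 + 2 * h * Re lam + h^2 * (norm lam)^2"
      by (simp add: cmod_power2)
    also have "\<dots> \<le> 1 + 2 * h * Re lam + h * d"
    proof -
      have "h^2 * (norm lam)^2 \<le> h^2 * R^2" using nl h0 by (simp add: mult_left_mono)
      also have "h^2 * R^2 = h * d" unfolding h_def using R0 by (simp add: power2_eq_square)
      finally show ?thesis by simp
    qed
    also have "\<dots> < r^2"
    proof -
      have "h * d \<le> h * (- Re lam)" using mult_left_mono[OF dle[OF that], of h] h0 by simp
      moreover have "0 < h * d" using h0 d0 by simp
      moreover have "2 * h * Re lam = 2 * (h * Re lam)" by simp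
      ultimately show ?thesis unfolding r2 by linarith
    qed
    finally have "(norm (1 + complex_of_real h * lam))^2 < r^2" .
    thus ?thesis using r0 by (simp add: power_less_imp_less_base)
  qed
  define A' where "A' = mat n n (\<lambda>(i,j). (of_bool (i=j) + complex_of_real h * Mc $$ (i,j)) / complex_of_real r)"
  have A'c: "A' \<in> carrier_mat n n" unfolding A'_def by simp
  have A'v: "vec_index (A' *\<^sub>v v) i = (vec_index v i + complex_of_real h * vec_index (Mc *\<^sub>v v) i) / complex_of_real r"
    if v: "v \<in> carrier_vec n" and i: "i < n" for v i
  proof -
    have "vec_index (A' *\<^sub>v v) i = (\<Sum>j<n. A' $$ (i,j) * vec_index v j)"
      by (rule mat_vec_index_sum[OF A'c v i])
    also have "\<dots> = (\<Sum>j<n. (of_bool (i=j) * vec_index v j + complex_of_real h * (Mc $$ (i,j) * vec_index v j)) / complex_of_real r)"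
      using i by (intro sum.cong) (auto simp: A'_def field_simps)
    also have "\<dots> = ((\<Sum>j<n. of_bool (i=j) * vec_index v j) + complex_of_real h * (\<Sum>j<n. Mc $$ (i,j) * vec_index v j)) / complex_of_real r"
      by (simp add: sum_divide_distrib[symmetric] sum.distrib sum_distrib_left)
    also have "(\<Sum>j<n. of_bool (i=j) * vec_index v j) = vec_index v i"
    proof -
      have "(\<Sum>j<n. of_bool (i=j) * vec_index v j) = (\<Sum>j<n. if i = j then vec_index v j else 0)"
        by (rule sum.cong) auto
      thus ?thesis using i by simp
    qed
    also have "(\<Sum>j<n. Mc $$ (i,j) * vec_index v j) = vec_index (Mc *\<^sub>v v) i"
      by (rule mat_vec_index_sum[OF Mcc v i, symmetric])
    finally show ?thesis .
  qed
  have A'eig: "norm nu < 1" if "eigenvalue A' nu" for nu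
  proof -
    from that obtain v where v: "eigenvector A' v nu" unfolding eigenvalue_def by auto
    hence vc: "v \<in> carrier_vec n" and vnz: "v \<noteq> 0\<^sub>v n" and vev: "A' *\<^sub>v v = nu \<cdot>\<^sub>v v"
      unfolding eigenvector_def A'_def by auto
    define lam where "lam = (complex_of_real r * nu - 1) / complex_of_real h"
    have "Mc *\<^sub>v v = lam \<cdot>\<^sub>v v"
    proof (rule eq_vecI)
      fix i assume "i < dim_vec (lam \<cdot>\<^sub>v v)"
      hence i: "i < n" using vc by simp
      have "nu * vec_index v i = (vec_index v i + complex_of_real h * vec_index (Mc *\<^sub>v v) i) / complex_of_real r"
        using A'v[OF vc i] vev i vc by (metis carrier_vecD index_smult_vec(1))
      hence "vec_index (Mc *\<^sub>v v) i = lam * vec_index v i"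
        unfolding lam_def using h0 r0 by (simp add: field_simps)
      thus "vec_index (Mc *\<^sub>v v) i = vec_index (lam \<cdot>\<^sub>v v) i" using i vc by simp
    qed (use vc Mcc in auto)
    hence "eigenvector Mc v lam" using vc vnz Mcc unfolding eigenvector_def by auto
    hence "lam \<in> S" unfolding S_def spectrum_def eigenvalue_def by auto
    from lamS[OF this] have "norm (complex_of_real r * nu) < r"
      unfolding lam_def using h0 by simp
    thus ?thesis using r0 by (simp add: norm_mult)
  qed
  have sr: "spectral_radius A' < 1"
  proof -
    from spectral_radius_mem_max(1)[OF A'c n0] obtain nu where
      "nu \<in> spectrum A'" "spectral_radius A' = norm nu" by auto
    thus ?thesis using A'eig unfolding spectrum_def by auto
  qed
  from spectral_radius_jnf_norm_bound_less_1_upper_triangular[OF A'c sr]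
  obtain c where c: "\<And>k. norm_bound (A' ^\<^sub>m k) c" by auto
  have c0: "c \<ge> 0" using c[of 0] n0 unfolding norm_bound_def
    by (metis A'c order.trans norm_ge_zero pow_mat_dim_square)
  define T' where "T' = (\<lambda>y::real^'n. (1/r) *\<^sub>R (y + h *\<^sub>R (M *v y)))"
  define cv where "cv = (\<lambda>y::real^'n. vec n (\<lambda>k. complex_of_real (y $ e k)))"
  have cvc: "cv y \<in> carrier_vec n" for y unfolding cv_def by simp
  have T'cv: "cv (T' y) = A' *\<^sub>v cv y" for y
  proof (rule eq_vecI)
    fix i assume "i < dim_vec (A' *\<^sub>v cv y)"
    hence i: "i < n" using A'c by simp
    have Mi: "vec_index (Mc *\<^sub>v cv y) i = complex_of_real ((M *v y) $ e i)"
    proof -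
      have "vec_index (Mc *\<^sub>v cv y) i = (\<Sum>j<n. Mc $$ (i,j) * vec_index (cv y) j)"
        by (rule mat_vec_index_sum[OF Mcc cvc i])
      also have "\<dots> = (\<Sum>j\<in>{0..<n}. complex_of_real (M $ e i $ e j * y $ e j))"
        using i by (intro sum.cong) (auto simp: Mc_def cv_def)
      also have "\<dots> = (\<Sum>j\<in>UNIV. complex_of_real (M $ e i $ j * y $ j))"
        by (rule sum.reindex_bij_betw[OF e'])
      also have "\<dots> = complex_of_real ((M *v y) $ e i)"
        by (simp add: matrix_vector_mult_def)
      finally show ?thesis .
    qed
    show "vec_index (cv (T' y)) i = vec_index (A' *\<^sub>v cv y) i"
      unfolding A'v[OF cvc i] Mi using i by (simp add: cv_def T'_def)
  qed (use A'c in \<open>simp add: cv_def\<close>)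
  have iter: "cv ((T' ^^ k) y) = (A' ^\<^sub>m k) *\<^sub>v cv y" for k y
  proof (induction k arbitrary: y)
    case 0 thus ?case using cvc A'c by simp
  next
    case (Suc k)
    have "cv ((T' ^^ Suc k) y) = cv ((T' ^^ k) (T' y))" by (simp add: funpow_Suc_right del: funpow.simps)
    also have "\<dots> = (A' ^\<^sub>m k) *\<^sub>v (A' *\<^sub>v cv y)" using Suc T'cv by simp
    also have "\<dots> = (A' ^\<^sub>m Suc k) *\<^sub>v cv y"
      using A'c cvc by (simp add: assoc_mult_mat_vec[of _ n n _ n, symmetric])
    finally show ?case .
  qed
  have bnd1: "norm ((T' ^^ k) y) \<le> real n * (real n * c) * norm y" for k y
  proof -
    have comp: "\<bar>((T' ^^ k) y) $ i\<bar> \<le> real n * c * norm y" for i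
    proof -
      have "\<bar>((T' ^^ k) y) $ i\<bar> = norm (vec_index (cv ((T' ^^ k) y)) (ix i))"
        using ix1 by (simp add: cv_def)
      also have "\<dots> = norm (\<Sum>j<n. (A' ^\<^sub>m k) $$ (ix i, j) * vec_index (cv y) j)"
        unfolding iter by (rule arg_cong[where f=norm], rule mat_vec_index_sum[OF _ cvc ix1(1)]) (use A'c in simp)
      also have "\<dots> \<le> (\<Sum>j<n. norm ((A' ^\<^sub>m k) $$ (ix i, j)) * norm (vec_index (cv y) j))"
        by (rule order.trans[OF norm_sum], simp add: norm_mult)
      also have "\<dots> \<le> (\<Sum>j<n. c * norm y)"
      proof (rule sum_mono)
        fix j assume j: "j \<in> {..<n}"
        have "norm ((A' ^\<^sub>m k) $$ (ix i, j)) \<le> c"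
          using c[of k] j ix1 A'c unfolding norm_bound_def by auto
        moreover have "norm (vec_index (cv y) j) \<le> norm y"
          using j by (simp add: cv_def component_le_norm_cart)
        ultimately show "norm ((A' ^\<^sub>m k) $$ (ix i, j)) * norm (vec_index (cv y) j) \<le> c * norm y"
          using c0 by (simp add: mult_mono)
      qed
      also have "\<dots> = real n * c * norm y" by simp
      finally show ?thesis .
    qed
    have "norm ((T' ^^ k) y) \<le> (\<Sum>i\<in>UNIV. \<bar>((T' ^^ k) y) $ i\<bar>)" by (rule norm_le_l1_cart)
    also have "\<dots> \<le> (\<Sum>i\<in>(UNIV::'n set). real n * c * norm y)" by (rule sum_mono, rule comp)
    also have "\<dots> = real n * (real n * c) * norm y" by (simp add: n_def)
    finally show ?thesis .
  qed
  define T where "T = (\<lambda>y::real^'n. y + h *\<^sub>R (M *v y))"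
  have T'lin: "T' (a *\<^sub>R y) = a *\<^sub>R T' y" for a y
    unfolding T'_def by (simp add: matrix_vector_mult_scaleR algebra_simps)
  have TT': "T y = r *\<^sub>R T' y" for y unfolding T_def T'_def using r0 by simp
  have Tk: "(T ^^ k) y = (r^k) *\<^sub>R (T' ^^ k) y" for k y
  proof (induction k)
    case 0 thus ?case by simp
  next
    case (Suc k)
    have "(T ^^ Suc k) y = T ((T ^^ k) y)" by simp
    also have "\<dots> = r *\<^sub>R T' ((r^k) *\<^sub>R (T' ^^ k) y)" by (subst Suc[symmetric], rule TT')
    also have "\<dots> = (r^Suc k) *\<^sub>R (T' ^^ Suc k) y" by (simp add: T'lin)
    finally show ?case .
  qed
  show ?thesis
  proof (intro exI conjI allI)
    fix k x
    have "norm ((T ^^ k) x) = r^k * norm ((T' ^^ k) x)" using Tk r0 by simp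
    also have "\<dots> \<le> r^k * (real n * (real n * c) * norm x)"
      using bnd1 r0 by (simp add: mult_left_mono)
    finally show "norm (((\<lambda>y. y + h *\<^sub>R (M *v y)) ^^ k) x) \<le> (real n * (real n * c)) * r^k * norm x"
      unfolding T_def by (simp add: mult_ac)
  qed (use h0 r0 r1 in auto)
qed

lemma lyap_from_decay:
  fixes M :: "real^'n^'n" and T :: "real^'n \<Rightarrow> real^'n"
  assumes h0: "h > 0" and r0: "0 < r" and r1: "r < 1"
    and dec: "\<And>k x. norm ((T ^^ k) x) \<le> C * r^k * norm x"
    and Tdef: "T = (\<lambda>y. y + h *\<^sub>R (M *v y))"
  shows "\<exists>Bf K. bounded_bilinear Bf \<and> (\<forall>x y. Bf x y = Bf y x) \<and> (\<forall>x. (norm x)^2 \<le> Bf x x)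
     \<and> K > 0 \<and> (\<forall>x y. \<bar>Bf x y\<bar> \<le> K * norm x * norm y) \<and> (\<forall>x. 2 * h * Bf x (M *v x) \<le> - (norm x ^ 2))"
proof -
  define C1 where "C1 = max C 0"
  have C1: "C1 \<ge> 0" unfolding C1_def by simp
  have dec1: "norm ((T ^^ k) x) \<le> C1 * r^k * norm x" for k x
    using dec[of k x] r0 unfolding C1_def
    by (smt (verit, best) mult_right_mono norm_ge_zero zero_le_power)
  have linT: "linear T" unfolding Tdef
    by (rule linearI) (simp_all add: matrix_vector_right_distrib matrix_vector_mult_scaleR algebra_simps)
  have linTk: "linear (T ^^ k)" for k
  proof (induction k)
    case 0 show ?case using linear_id by (simp add: id_def)
  next
    case (Suc k) thus ?case using linear_compose[OF Suc.IH linT] by (simp add: o_def)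
  qed
  define g where "g = (\<lambda>x y k. inner ((T ^^ k) x) ((T ^^ k) y))"
  define q where "q = r^2"
  have q0: "0 \<le> q" "q < 1" unfolding q_def using r0 r1 by (auto simp: power_less_one_iff abs_square_less_1)
  have gb: "\<bar>g x y k\<bar> \<le> (C1^2 * norm x * norm y) * q^k" for x y k
  proof -
    have "\<bar>g x y k\<bar> \<le> norm ((T ^^ k) x) * norm ((T ^^ k) y)" unfolding g_def by (rule Cauchy_Schwarz_ineq2)
    also have "\<dots> \<le> (C1 * r^k * norm x) * (C1 * r^k * norm y)"
      by (rule mult_mono[OF dec1 dec1]) (use C1 r0 in auto)
    also have "\<dots> = (C1^2 * norm x * norm y) * q^k" unfolding q_def
      by (simp add: power2_eq_square power_mult_distrib[symmetric] power_mult[symmetric] mult_ac)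
    finally show ?thesis .
  qed
  have sq: "summable (\<lambda>k. (C1^2 * norm x * norm y) * q^k)" for x y
    by (rule summable_mult, rule summable_geometric) (use q0 in simp)
  have sg: "summable (g x y)" for x y
    by (rule summable_comparison_test[OF _ sq[of x y]]) (use gb in auto)
  have sgs: "summable (\<lambda>k. g x y (Suc k))" for x y using sg summable_Suc_iff by blast
  define Bf where "Bf = (\<lambda>x y. suminf (g x y))"
  have gadd1: "g (a + a') b = (\<lambda>k. g a b k + g a' b k)" for a a' b
    unfolding g_def by (auto simp: linear_add[OF linTk] inner_add_left)
  have gadd2: "g a (b + b') = (\<lambda>k. g a b k + g a b' k)" for a b b'
    unfolding g_def by (auto simp: linear_add[OF linTk] inner_add_right)
  have gsc1: "g (c *\<^sub>R a) b = (\<lambda>k. c * g a b k)" for c a b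
    unfolding g_def by (auto simp: linear_scale[OF linTk])
  have gsc2: "g a (c *\<^sub>R b) = (\<lambda>k. c * g a b k)" for c a b
    unfolding g_def by (auto simp: linear_scale[OF linTk])
  define K where "K = C1^2 / (1 - q) + 1"
  have K0: "K > 0" unfolding K_def using q0 C1 by (simp add: add_nonneg_pos)
  have bnd: "\<bar>Bf x y\<bar> \<le> K * norm x * norm y" for x y
  proof -
    have sum_eq: "(\<Sum>k. (C1^2 * norm x * norm y) * q^k) = C1^2 * norm x * norm y / (1 - q)"
      using q0 by (simp add: suminf_mult suminf_geometric summable_geometric)
    have "Bf x y \<le> (\<Sum>k. (C1^2 * norm x * norm y) * q^k)"
      unfolding Bf_def by (rule suminf_le[OF _ sg sq]) (use gb in \<open>auto simp: abs_le_iff\<close>)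
    moreover have "- Bf x y \<le> (\<Sum>k. (C1^2 * norm x * norm y) * q^k)"
      unfolding Bf_def suminf_minus[OF sg, symmetric]
      by (rule suminf_le[OF _ summable_minus[OF sg] sq]) (use gb in \<open>auto simp: abs_le_iff\<close>)
    moreover have "C1^2 * norm x * norm y / (1 - q) \<le> K * norm x * norm y"
    proof -
      have "C1^2 * norm x * norm y / (1 - q) = (C1^2 / (1-q)) * (norm x * norm y)" by simp
      also have "\<dots> \<le> K * (norm x * norm y)" unfolding K_def by (rule mult_right_mono) auto
      finally show ?thesis by (simp add: mult.assoc)
    qed
    ultimately show ?thesis unfolding sum_eq by linarith
  qed
  have bb: "bounded_bilinear Bf"
  proof (rule bounded_bilinear.intro)
    fix a a' b b' :: "real^'n" and c :: real
    show "Bf (a + a') b = Bf a b + Bf a' b" unfolding Bf_def gadd1 by (rule suminf_add[OF sg sg, symmetric])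
    show "Bf a (b + b') = Bf a b + Bf a b'" unfolding Bf_def gadd2 by (rule suminf_add[OF sg sg, symmetric])
    show "Bf (c *\<^sub>R a) b = c *\<^sub>R Bf a b" unfolding Bf_def gsc1 using suminf_mult[OF sg] by simp
    show "Bf a (c *\<^sub>R b) = c *\<^sub>R Bf a b" unfolding Bf_def gsc2 using suminf_mult[OF sg] by simp
  next
    show "\<exists>K. \<forall>a b. norm (Bf a b) \<le> norm a * norm b * K"
      using bnd by (intro exI[of _ K]) (simp add: mult_ac)
  qed
  have sym: "Bf x y = Bf y x" for x y unfolding Bf_def g_def by (simp add: inner_commute)
  have split: "Bf x y = g x y 0 + (\<Sum>k. g x y (Suc k))" for x y
    unfolding Bf_def using suminf_split_head[OF sg[of x y]] by simp
  have low: "(norm x)^2 \<le> Bf x x" for x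
  proof -
    have "0 \<le> (\<Sum>k. g x x (Suc k))" by (rule suminf_nonneg[OF sgs]) (simp add: g_def)
    moreover have "g x x 0 = (norm x)^2" by (simp add: g_def power2_norm_eq_inner)
    ultimately show ?thesis using split[of x x] by simp
  qed
  have shift: "Bf (T x) (T x) = Bf x x - (norm x ^ 2)" for x
  proof -
    have "g (T x) (T x) = (\<lambda>k. g x x (Suc k))"
      unfolding g_def by (auto simp: funpow_Suc_right simp del: funpow.simps)
    hence "Bf (T x) (T x) = (\<Sum>k. g x x (Suc k))" unfolding Bf_def by simp
    moreover have "g x x 0 = (norm x)^2" by (simp add: g_def power2_norm_eq_inner)
    ultimately show ?thesis using split[of x x] by simp
  qed
  have key: "2 * h * Bf x (M *v x) \<le> - (norm x ^ 2)" for x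
  proof -
    interpret bounded_bilinear Bf by (rule bb)
    have "Bf (T x) (T x) = Bf x x + 2 * h * Bf x (M *v x) + h^2 * Bf (M *v x) (M *v x)"
      unfolding Tdef by (simp add: add_left add_right scaleR_left scaleR_right sym[of "M *v x" x] power2_eq_square algebra_simps)
    moreover have "0 \<le> Bf (M *v x) (M *v x)" using low[of "M *v x"] by (smt (verit) zero_le_power2)
    ultimately show ?thesis using shift[of x] by (smt (verit) zero_le_power2 mult_nonneg_nonneg)
  qed
  show ?thesis using bb sym low K0 bnd key by blast
qed

lemma cont_of_deriv01:
  assumes "\<And>x. x \<in> {0..1} \<Longrightarrow> ((g::real\<Rightarrow>real) has_real_derivative g' x) (at x within {0..1})"
  shows "continuous_on {0..1} g"
  using assms DERIV_continuous continuous_on_eq_continuous_within by blast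

lemma ibp01:
  fixes g g' k k' :: "real \<Rightarrow> real"
  assumes dg: "\<And>x. x \<in> {0..1} \<Longrightarrow> (g has_real_derivative g' x) (at x within {0..1})"
    and dk: "\<And>x. x \<in> {0..1} \<Longrightarrow> (k has_real_derivative k' x) (at x within {0..1})"
    and cg: "continuous_on {0..1} g'" and ck: "continuous_on {0..1} k'"
  shows "integral {0..1} (\<lambda>x. g x * k' x) = g 1 * k 1 - g 0 * k 0 - integral {0..1} (\<lambda>x. g' x * k x)"
proof -
  have cg0: "continuous_on {0..1} g" by (rule cont_of_deriv01[OF dg])
  have ck0: "continuous_on {0..1} k" by (rule cont_of_deriv01[OF dk])
  have D: "((\<lambda>x. g x * k x) has_vector_derivative g' x * k x + g x * k' x) (at x within {0..1})"
    if x: "x \<in> {0..1}" for x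
    using DERIV_mult[OF dg[OF x] dk[OF x]]
    by (simp add: has_real_derivative_iff_has_vector_derivative mult.commute)
  have "((\<lambda>x. g' x * k x + g x * k' x) has_integral (g 1 * k 1 - g 0 * k 0)) {0..1}"
    using fundamental_theorem_of_calculus[of 0 1 "\<lambda>x. g x * k x" "\<lambda>x. g' x * k x + g x * k' x"] D
    by simp
  hence "integral {0..1} (\<lambda>x. g' x * k x + g x * k' x) = g 1 * k 1 - g 0 * k 0" by blast
  moreover have "integral {0..1} (\<lambda>x. g' x * k x + g x * k' x)
      = integral {0..1} (\<lambda>x. g' x * k x) + integral {0..1} (\<lambda>x. g x * k' x)"
    by (intro integral_add integrable_continuous_interval continuous_intros cg ck cg0 ck0)
  ultimately show ?thesis by simp
qed

lemma poincare01:
  fixes u ux :: "real \<Rightarrow> real"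
  assumes du: "\<And>x. x \<in> {0..1} \<Longrightarrow> (u has_real_derivative ux x) (at x within {0..1})"
    and cux: "continuous_on {0..1} ux" and u1: "u 1 = 0"
  shows "integral {0..1} (\<lambda>x. (u x)^2) \<le> 4 * integral {0..1} (\<lambda>x. (ux x)^2)"
    and "(u 0)^2 \<le> 5 * integral {0..1} (\<lambda>x. (ux x)^2)"
proof -
  have cu: "continuous_on {0..1} u" by (rule cont_of_deriv01[OF du])
  have du2: "((\<lambda>x. (u x)^2) has_real_derivative 2 * u x * ux x) (at x within {0..1})" if "x \<in> {0..1}" for x
    using DERIV_mult[OF du[OF that] du[OF that]] by (simp add: power2_eq_square mult.assoc)
  have cdu2: "continuous_on {0..1} (\<lambda>x. 2 * u x * ux x)" by (intro continuous_intros cu cux)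
  have did: "((\<lambda>x. x) has_real_derivative 1) (at x within {0..1})" for x by (rule DERIV_ident)
  have dc: "((\<lambda>x. 1) has_real_derivative 0) (at x within {0..1})" for x::real by (rule DERIV_const)
  have int: "(\<lambda>x. f x) integrable_on {0..1}" if "continuous_on {0..1} f" for f :: "real \<Rightarrow> real"
    using integrable_continuous_interval[OF that] by simp
  define I where "I = integral {0..1} (\<lambda>x. (u x)^2)"
  define J where "J = integral {0..1} (\<lambda>x. (ux x)^2)"
  have e1: "integral {0..1} (\<lambda>x. (u x)^2 * 1) = (u 1)^2 * 1 - (u 0)^2 * 0 - integral {0..1} (\<lambda>x. 2 * u x * ux x * x)"
    by (rule ibp01[of "\<lambda>x. (u x)^2" "\<lambda>x. 2 * u x * ux x" "\<lambda>x. x" "\<lambda>x. 1", OF du2 did cdu2]) auto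
  have "I = - integral {0..1} (\<lambda>x. 2 * u x * ux x * x)" using e1 u1 unfolding I_def by simp
  also have "\<dots> = integral {0..1} (\<lambda>x. - (2 * u x * ux x * x))" by (simp add: integral_neg)
  also have "\<dots> \<le> integral {0..1} (\<lambda>x. (u x)^2 / 2 + 2 * (ux x)^2)"
  proof (rule integral_le)
    show "(\<lambda>x. - (2 * u x * ux x * x)) integrable_on {0..1}" by (intro int continuous_intros cu cux)
    show "(\<lambda>x. (u x)^2 / 2 + 2 * (ux x)^2) integrable_on {0..1}" by (intro int continuous_intros cu cux) auto
    fix x :: real assume x: "x \<in> {0..1}"
    have "- (2 * u x * ux x * x) \<le> (u x)^2 / 2 + 2 * (ux x * x)^2"
      using sum_squares_ge_zero[of "u x / 2 + ux x * x" 0] by (simp add: power2_eq_square algebra_simps)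
    also have "(ux x * x)^2 \<le> (ux x)^2" using x by (simp add: power_mult_distrib power_le_one mult_left_le)
    finally show "- (2 * u x * ux x * x) \<le> (u x)^2 / 2 + 2 * (ux x)^2" by simp
  qed
  also have "\<dots> = I / 2 + 2 * J" unfolding I_def J_def
    by (subst integral_add) (auto intro!: int continuous_intros cu cux)
  finally show "I \<le> 4 * J" by simp
  have e2: "integral {0..1} (\<lambda>x. (u x)^2 * 0) = (u 1)^2 * 1 - (u 0)^2 * 1 - integral {0..1} (\<lambda>x. 2 * u x * ux x * 1)"
    by (rule ibp01[of "\<lambda>x. (u x)^2" "\<lambda>x. 2 * u x * ux x" "\<lambda>x. 1" "\<lambda>x. 0", OF du2 dc cdu2]) auto
  hence "(u 0)^2 = integral {0..1} (\<lambda>x. - (2 * u x * ux x))" using u1 by (simp add: integral_neg)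
  also have "\<dots> \<le> integral {0..1} (\<lambda>x. (u x)^2 + (ux x)^2)"
  proof (rule integral_le)
    show "(\<lambda>x. - (2 * u x * ux x)) integrable_on {0..1}" by (intro int continuous_intros cu cux)
    show "(\<lambda>x. (u x)^2 + (ux x)^2) integrable_on {0..1}" by (intro int continuous_intros cu cux)
    fix x :: real
    show "- (2 * u x * ux x) \<le> (u x)^2 + (ux x)^2"
      using sum_squares_ge_zero[of "u x + ux x" 0] by (simp add: power2_eq_square algebra_simps)
  qed
  also have "\<dots> = I + J" unfolding I_def J_def
    by (subst integral_add) (auto intro!: int continuous_intros cu cux)
  finally show "(u 0)^2 \<le> 5 * J" using \<open>I \<le> 4 * J\<close> by simp
qed


lemma cont_slice:
  assumes "continuous_on ({0..1} \<times> A) (\<lambda>(x,t). f x t)" "s \<in> A"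
  shows "continuous_on {0..1} (\<lambda>x. f x s)"
proof -
  have "continuous_on {0..1} ((\<lambda>(x,t). f x t) \<circ> (\<lambda>x. (x, s)))"
    by (rule continuous_on_compose[OF _ continuous_on_subset[OF assms(1)]])
       (use assms(2) in \<open>auto intro!: continuous_intros\<close>)
  thus ?thesis by (simp add: o_def)
qed

lemma energy_deriv:
  fixes u ux uxx ut :: "real \<Rightarrow> real \<Rightarrow> real" and kap t0 t :: real
  assumes cu: "continuous_on ({0..1} \<times> {t0..}) (\<lambda>(x,t). u x t)"
    and d: "\<forall>x\<in>{0..1}. \<forall>t>t0. ((\<lambda>y. u y t) has_real_derivative ux x t) (at x within {0..1}) \<and>
            ((\<lambda>y. ux y t) has_real_derivative uxx x t) (at x within {0..1}) \<and>
            ((\<lambda>s. u x s) has_real_derivative ut x t) (at t)"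
    and cux: "continuous_on ({0..1} \<times> {t0<..}) (\<lambda>(x,t). ux x t)"
    and cuxx: "continuous_on ({0..1} \<times> {t0<..}) (\<lambda>(x,t). uxx x t)"
    and cut: "continuous_on ({0..1} \<times> {t0<..}) (\<lambda>(x,t). ut x t)"
    and pde: "\<forall>x\<in>{0<..<1}. \<forall>t>t0. ut x t = kap * uxx x t"
    and bc: "u 1 t = 0"
    and t: "t > t0"
  shows "((\<lambda>s. integral {0..1} (\<lambda>x. (u x s)^2)) has_real_derivative
           (- 2 * kap * (u 0 t * ux 0 t) - 2 * kap * integral {0..1} (\<lambda>x. (ux x t)^2))) (at t)"
proof -
  have cu': "continuous_on ({0..1} \<times> {t0<..}) (\<lambda>(x,t). u x t)"
    by (rule continuous_on_subset[OF cu]) auto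
  have L: "((\<lambda>s. integral (cbox 0 1) (\<lambda>x. (u x s)^2)) has_field_derivative
          integral (cbox 0 1) (\<lambda>x. 2 * u x t * ut x t)) (at t within {t0<..})"
  proof (rule leibniz_rule_field_derivative[where f = "\<lambda>s x. (u x s)^2" and fx = "\<lambda>s x. 2 * u x s * ut x s"])
    fix s x :: real assume s: "s \<in> {t0<..}" and x: "x \<in> cbox 0 1"
    have xs: "x \<in> {0..1}" "t0 < s" using x s by auto
    have du: "((\<lambda>s. u x s) has_real_derivative ut x s) (at s)" using d[rule_format, OF xs(1) xs(2)] by (elim conjE)
    have "((\<lambda>s. u x s * u x s) has_real_derivative ut x s * u x s + ut x s * u x s) (at s)"
      by (rule DERIV_mult[OF du du])
    moreover have "ut x s * u x s + ut x s * u x s = 2 * u x s * ut x s" by simp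
    moreover have "(\<lambda>s. u x s * u x s) = (\<lambda>s. (u x s)^2)" by (simp add: power2_eq_square)
    ultimately have "((\<lambda>s. (u x s)^2) has_real_derivative 2 * u x s * ut x s) (at s)" by simp
    thus "((\<lambda>s. (u x s)^2) has_field_derivative 2 * u x s * ut x s) (at s within {t0<..})"
      by (rule has_field_derivative_at_within)
  next
    fix s :: real assume s: "s \<in> {t0<..}"
    have "continuous_on {0..1} (\<lambda>x. u x s)" by (rule cont_slice[OF cu]) (use s in simp)
    hence "continuous_on {0..1} (\<lambda>x. (u x s)^2)" by (intro continuous_intros)
    thus "(\<lambda>x. (u x s)^2) integrable_on cbox 0 1"
      unfolding cbox_interval by (rule integrable_continuous_interval)
  next
    have c1: "continuous_on ({t0<..} \<times> {0..1}) (\<lambda>p. 2 * (\<lambda>(x,y). u y x) p * (\<lambda>(x,y). ut y x) p)"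
      by (intro continuous_on_mult continuous_on_const continuous_on_swap_args[OF cu'] continuous_on_swap_args[OF cut])
    have eq: "(\<lambda>p. 2 * (\<lambda>(x,y). u y x) p * (\<lambda>(x,y). ut y x) p) = (\<lambda>(s,x). 2 * u x s * ut x s)"
      by (auto simp: fun_eq_iff)
    show "continuous_on ({t0<..} \<times> cbox 0 1) (\<lambda>(s,x). 2 * u x s * ut x s)"
      using c1 unfolding eq cbox_interval .
  next
    show "t \<in> {t0<..}" using t by simp
  next
    show "convex {t0<..}" by simp
  qed
  have L': "((\<lambda>s. integral {0..1} (\<lambda>x. (u x s)^2)) has_real_derivative
          integral {0..1} (\<lambda>x. 2 * u x t * ut x t)) (at t)"
    using L t at_within_open[of t "{t0<..}"] by simp
  have "integral {0..1} (\<lambda>x. 2 * u x t * ut x t) = integral {0..1} (\<lambda>x. (2 * kap) * (u x t * uxx x t))"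
    by (rule integral_spike[of "{0,1}"]) (use pde t in auto)
  also have "\<dots> = (2 * kap) * integral {0..1} (\<lambda>x. u x t * uxx x t)" by simp
  also have "integral {0..1} (\<lambda>x. u x t * uxx x t) = u 1 t * ux 1 t - u 0 t * ux 0 t - integral {0..1} (\<lambda>x. ux x t * ux x t)"
  proof (rule ibp01)
    show "((\<lambda>y. u y t) has_real_derivative ux x t) (at x within {0..1})" if "x \<in> {0..1}" for x using d that t by auto
    show "((\<lambda>y. ux y t) has_real_derivative uxx x t) (at x within {0..1})" if "x \<in> {0..1}" for x using d that t by auto
    show "continuous_on {0..1} (\<lambda>x. ux x t)" by (rule cont_slice[OF cux]) (use t in auto)
    show "continuous_on {0..1} (\<lambda>x. uxx x t)" by (rule cont_slice[OF cuxx]) (use t in auto)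
  qed
  finally have E0: "integral {0..1} (\<lambda>x. 2 * u x t * ut x t) = 2 * kap * (u 1 t * ux 1 t - u 0 t * ux 0 t - integral {0..1} (\<lambda>x. ux x t * ux x t))" .
  have E: "integral {0..1} (\<lambda>x. 2 * u x t * ut x t) = - 2 * kap * (u 0 t * ux 0 t) - 2 * kap * integral {0..1} (\<lambda>x. (ux x t)^2)"
    unfolding E0 bc by (simp add: power2_eq_square algebra_simps)
  show ?thesis using L' unfolding E .
qed

lemma gronwall_exp:
  fixes W W' :: "real \<Rightarrow> real" and c t0 :: real
  assumes cont: "continuous_on {t0..} W"
    and der: "\<And>t. t > t0 \<Longrightarrow> (W has_real_derivative W' t) (at t)"
    and ineq: "\<And>t. t > t0 \<Longrightarrow> W' t \<le> - c * W t"
    and t: "t \<ge> t0"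
  shows "W t \<le> exp (- c * (t - t0)) * W t0"
proof (cases "t = t0")
  case True thus ?thesis by simp
next
  case False
  hence lt: "t0 < t" using t by simp
  define g where "g = (\<lambda>s. exp (c * s) * W s)"
  have dg: "(g has_real_derivative exp (c * s) * (c * W s + W' s)) (at s)" if "s > t0" for s
  proof -
    have "((\<lambda>s. exp (c * s)) has_real_derivative exp (c * s) * c) (at s)"
      by (auto intro!: derivative_eq_intros)
    from DERIV_mult[OF this der[OF that]] show ?thesis
      unfolding g_def by (simp add: algebra_simps)
  qed
  have cg: "continuous_on {t0..t} g" unfolding g_def
    by (intro continuous_intros continuous_on_subset[OF cont]) auto
  obtain l z where z: "t0 < z" "z < t" and dz: "DERIV g z :> l" and eq: "g t - g t0 = (t - t0) * l"
  proof -
    have "g differentiable (at x)" if "t0 < x" for x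
      using dg[OF that] real_differentiable_def by blast
    thus ?thesis using MVT[OF lt cg] that by auto
  qed
  have "l = exp (c * z) * (c * W z + W' z)" using DERIV_unique[OF dz dg[OF z(1)]] .
  also have "\<dots> \<le> 0" using ineq[OF z(1)] by (simp add: mult_nonpos_nonneg[of _ "exp _"] mult_le_0_iff)
  finally have "g t \<le> g t0" using eq lt by (smt (verit) mult_nonneg_nonpos)
  hence "exp (c * t) * W t \<le> exp (c * t0) * W t0" unfolding g_def .
  hence "exp (- (c * t)) * (exp (c * t) * W t) \<le> exp (- (c * t)) * (exp (c * t0) * W t0)"
    by (rule mult_left_mono) simp
  thus ?thesis by (simp add: exp_add[symmetric] exp_minus_inverse algebra_simps mult_exp_exp)
qed

theorem lemma1:
  fixes eps y0 theta t0 :: real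
    and A :: "real^'n^'n" and B Gamma0 :: "real^'n"
  assumes "eps > 0" and "-1 < y0" and "y0 < 0"
    and "0 \<le> theta" and "theta \<le> 1"
    and "hurwitz (A + outer B Gamma0)"
  shows "\<exists>Pi mu. Pi > 0 \<and> mu > 0 \<and>
    (\<forall>Om1 Om2 (Z :: real \<Rightarrow> real^'n).
       target_solution eps y0 theta A B Gamma0 t0 Om1 Om2 Z \<longrightarrow>
       (\<forall>t\<ge>t0. state_norm Om1 Om2 Z t \<le> Pi * exp (- mu * (t - t0)) * state_norm Om1 Om2 Z t0))"
proof -
  have yp: "0 < 1 + y0" and ym: "0 < 1 - y0" using assms(2,3) by auto
  define a where "a = (1 + y0) / (1 - y0)"
  define eps1 where "eps1 = eps / (1 + y0)^2"
  define eps2 where "eps2 = eps / (1 - y0)^2"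
  define w where "w = (1 - y0) / (1 + y0)"
  have e1: "eps1 > 0" unfolding eps1_def using assms(1) yp by simp
  have e2: "eps2 > 0" unfolding eps2_def using assms(1) ym by simp
  have w1: "w \<ge> 1" unfolding w_def using yp assms(3) by simp
  have gen: "p / m * (e / p^2) * (m * p) = e" if "p \<noteq> 0" "m \<noteq> 0" for p m e :: real
    using that by (simp add: power2_eq_square field_simps)
  have bal1: "a * eps1 * ((1 - y0) * (1 + y0)) = eps"
    unfolding a_def eps1_def using gen[of "1 + y0" "1 - y0" eps] yp ym by simp
  have bal2: "w * eps2 * ((1 - y0) * (1 + y0)) = eps"
    unfolding w_def eps2_def using gen[of "1 - y0" "1 + y0" eps] yp ym by (simp add: mult.commute)
  have bal: "a * eps1 = w * eps2"
  proof -
    have "(1 - y0) * (1 + y0) \<noteq> 0" using yp ym by simp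
    thus ?thesis using bal1 bal2 by (metis mult_right_cancel)
  qed
  define Mm where "Mm = A + outer B Gamma0"
  obtain h C r where h0: "h > 0" and r0: "0 < r" and r1: "r < 1"
    and dec: "\<And>k x. norm (((\<lambda>y. y + h *\<^sub>R (Mm *v y)) ^^ k) x) \<le> C * r^k * norm x"
    using hurwitz_discrete_decay[OF assms(6)[folded Mm_def]] by blast
  obtain Bf K where bb: "bounded_bilinear Bf" and sym: "\<And>x y. Bf x y = Bf y x"
    and low: "\<And>x. (norm x)^2 \<le> Bf x x" and K0: "K > 0"
    and bnd: "\<And>x y. \<bar>Bf x y\<bar> \<le> K * norm x * norm y"
    and key: "\<And>x. 2 * h * Bf x (Mm *v x) \<le> - (norm x ^ 2)"
    using lyap_from_decay[OF h0 r0 r1 dec refl] by blast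
  define e0 where "e0 = min eps1 (w * eps2)"
  have e00: "e0 > 0" unfolding e0_def using e1 e2 w1 by simp
  define G where "G = 2 * h * K^2 * (norm B)^2"
  have G0: "G \<ge> 0" unfolding G_def using h0 by simp
  define Kc where "Kc = 5 * G / e0 + 1"
  have Kc1: "Kc \<ge> 1" unfolding Kc_def using G0 e00 by simp
  have Kce: "Kc * e0 = 5 * G + e0" unfolding Kc_def using e00 by (simp add: field_simps)
  define c where "c = min (e0 / (4 * w)) (1 / (2 * h * K))"
  have c0: "c > 0" unfolding c_def using e00 w1 h0 K0 by simp
  define hi where "hi = Kc * w + K"
  have hi0: "hi > 0" unfolding hi_def using Kc1 w1 K0 by (simp add: add_pos_pos)
  show ?thesis
  proof (rule exI[of _ "sqrt hi"], rule exI[of _ "c / 2"], intro conjI allI impI)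
    show "sqrt hi > 0" using hi0 by simp
    show "c / 2 > 0" using c0 by simp
    fix Om1 Om2 and Z :: "real \<Rightarrow> real^'n" and t :: real
    assume ts: "target_solution eps y0 theta A B Gamma0 t0 Om1 Om2 Z" and t: "t0 \<le> t"
    from ts obtain Om1x Om2x Om1xx Om2xx Om1t Om2t where
      c1: "continuous_on ({0..1} \<times> {t0..}) (\<lambda>(x,t). Om1 x t)" and
      c2: "continuous_on ({0..1} \<times> {t0..}) (\<lambda>(x,t). Om2 x t)" and
      D: "\<forall>x\<in>{0..1}. \<forall>t>t0.
            ((\<lambda>y. Om1 y t) has_real_derivative Om1x x t) (at x within {0..1}) \<and>
            ((\<lambda>y. Om2 y t) has_real_derivative Om2x x t) (at x within {0..1}) \<and>
            ((\<lambda>y. Om1x y t) has_real_derivative Om1xx x t) (at x within {0..1}) \<and>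
            ((\<lambda>y. Om2x y t) has_real_derivative Om2xx x t) (at x within {0..1}) \<and>
            ((\<lambda>s. Om1 x s) has_real_derivative Om1t x t) (at t) \<and>
            ((\<lambda>s. Om2 x s) has_real_derivative Om2t x t) (at t)" and
      cc1: "continuous_on ({0..1} \<times> {t0<..}) (\<lambda>(x,t). Om1x x t)" and
      cc2: "continuous_on ({0..1} \<times> {t0<..}) (\<lambda>(x,t). Om2x x t)" and
      cc3: "continuous_on ({0..1} \<times> {t0<..}) (\<lambda>(x,t). Om1xx x t)" and
      cc4: "continuous_on ({0..1} \<times> {t0<..}) (\<lambda>(x,t). Om2xx x t)" and
      cc5: "continuous_on ({0..1} \<times> {t0<..}) (\<lambda>(x,t). Om1t x t)" and
      cc6: "continuous_on ({0..1} \<times> {t0<..}) (\<lambda>(x,t). Om2t x t)" and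
      pde: "\<forall>x\<in>{0<..<1}. \<forall>t>t0. Om1t x t = eps1 * Om1xx x t \<and> Om2t x t = eps2 * Om2xx x t" and
      bc0: "\<forall>t>t0. Om1x 0 t + a * Om2x 0 t = 0 \<and> Om1 0 t = Om2 0 t" and
      bc1: "\<forall>t\<ge>t0. Om1 1 t = 0 \<and> Om2 1 t = 0" and
      Zd: "\<forall>t\<ge>t0. (Z has_vector_derivative
         (Mm *v Z t + (theta * Om1 0 t + (1 - theta) * Om2 0 t) *\<^sub>R B)) (at t within {t0..})"
      unfolding target_solution_def Let_def a_def eps1_def eps2_def Mm_def by blast
    define I1 where "I1 = (\<lambda>s. integral {0..1} (\<lambda>x. (Om1 x s)^2))"
    define I2 where "I2 = (\<lambda>s. integral {0..1} (\<lambda>x. (Om2 x s)^2))"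
    define J1 where "J1 = (\<lambda>s. integral {0..1} (\<lambda>x. (Om1x x s)^2))"
    define J2 where "J2 = (\<lambda>s. integral {0..1} (\<lambda>x. (Om2x x s)^2))"
    define W where "W = (\<lambda>s. Kc * (I1 s + w * I2 s) + Bf (Z s) (Z s))"
    define Zp where "Zp = (\<lambda>s. Mm *v Z s + (theta * Om1 0 s + (1 - theta) * Om2 0 s) *\<^sub>R B)"
    define W' where "W' = (\<lambda>s. Kc * ((- 2 * eps1 * (Om1 0 s * Om1x 0 s) - 2 * eps1 * J1 s)
                        + w * (- 2 * eps2 * (Om2 0 s * Om2x 0 s) - 2 * eps2 * J2 s))
                        + (Bf (Z s) (Zp s) + Bf (Zp s) (Z s)))"
    have int1: "(\<lambda>x. f x) integrable_on {0..1}" if "continuous_on {0..1} f" for f :: "real \<Rightarrow> real"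
      using integrable_continuous_interval[OF that] by simp
    have I1nn: "I1 s \<ge> 0" if "s \<ge> t0" for s
      unfolding I1_def by (rule integral_nonneg) (auto intro!: int1 continuous_intros cont_slice[OF c1] that)
    have I2nn: "I2 s \<ge> 0" if "s \<ge> t0" for s
      unfolding I2_def by (rule integral_nonneg) (auto intro!: int1 continuous_intros cont_slice[OF c2] that)
    have J1nn: "J1 s \<ge> 0" if "s > t0" for s
      unfolding J1_def by (rule integral_nonneg) (auto intro!: int1 continuous_intros cont_slice[OF cc1] that)
    have J2nn: "J2 s \<ge> 0" if "s > t0" for s
      unfolding J2_def by (rule integral_nonneg) (auto intro!: int1 continuous_intros cont_slice[OF cc2] that)
    define Sq where "Sq = (\<lambda>s. I1 s + I2 s + (norm (Z s))^2)"
    have sn: "state_norm Om1 Om2 Z s = sqrt (Sq s)" if "s \<ge> t0" for s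
    proof -
      have "integral {0..1} (\<lambda>x. (Om1 x s)^2 + (Om2 x s)^2) = I1 s + I2 s"
        unfolding I1_def I2_def
        by (rule integral_add) (auto intro!: int1 continuous_intros cont_slice[OF c1] cont_slice[OF c2] that)
      thus ?thesis unfolding state_norm_def Sq_def by simp
    qed
    have Wlo: "Sq s \<le> W s" if "s \<ge> t0" for s
    proof -
      have "I1 s + I2 s \<le> Kc * (I1 s + w * I2 s)"
      proof -
        have "I1 s + I2 s \<le> I1 s + w * I2 s" using w1 I2nn[OF that] by (simp add: mult_le_cancel_right1)
        also have "\<dots> \<le> Kc * (I1 s + w * I2 s)"
        proof -
          have V0: "0 \<le> I1 s + w * I2 s" using I1nn[OF that] I2nn[OF that] w1 by simp
          show ?thesis using mult_right_mono[OF Kc1 V0] by simp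
        qed
        finally show ?thesis .
      qed
      thus ?thesis unfolding Sq_def W_def using low[of "Z s"] by simp
    qed
    have Whi: "W s \<le> hi * Sq s" if "s \<ge> t0" for s
    proof -
      have "Kc * (I1 s + w * I2 s) \<le> Kc * w * (I1 s + I2 s)"
        using Kc1 w1 I1nn[OF that] I2nn[OF that] by (simp add: algebra_simps mult_left_mono mult_le_cancel_right1)
      moreover have "Bf (Z s) (Z s) \<le> K * (norm (Z s))^2" using bnd[of "Z s" "Z s"] by (simp add: power2_eq_square mult.assoc)
      moreover have "Kc * w * (I1 s + I2 s) + K * (norm (Z s))^2 \<le> hi * Sq s"
        unfolding hi_def Sq_def using Kc1 w1 K0 I1nn[OF that] I2nn[OF that]
        by (simp add: algebra_simps add_mono mult_left_mono)
      ultimately show ?thesis unfolding W_def by linarith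
    qed
    have contI: "continuous_on {t0..} (\<lambda>s. integral {0..1} (\<lambda>x. (f x s)^2))"
      if cf: "continuous_on ({0..1} \<times> {t0..}) (\<lambda>(x,t). f x t)" for f :: "real \<Rightarrow> real \<Rightarrow> real"
    proof -
      have cc: "continuous_on ({t0..} \<times> {0..1}) (\<lambda>p. ((\<lambda>(x,y). f y x) p)^2)"
        by (intro continuous_intros continuous_on_swap_args[OF cf])
      have eq: "(\<lambda>p. ((\<lambda>(x,y). f y x) p)^2) = (\<lambda>(s,x). (f x s)^2)" by (auto simp: fun_eq_iff)
      have "continuous_on ({t0..} \<times> cbox 0 1) (\<lambda>(s,x). (f x s)^2)" using cc unfolding eq cbox_interval .
      from integral_continuous_on_param[OF this] show ?thesis by simp
    qed
    have contZ: "continuous_on {t0..} Z"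
      using Zd has_vector_derivative_continuous continuous_on_eq_continuous_within by fastforce
    have contW: "continuous_on {t0..} W"
      unfolding W_def I1_def I2_def
      by (intro continuous_intros contI[OF c1] contI[OF c2] bounded_bilinear.continuous_on[OF bb] contZ)
    have derW: "(W has_real_derivative W' s) (at s)" if s: "s > t0" for s
    proof -
      have d1: "(I1 has_real_derivative (- 2 * eps1 * (Om1 0 s * Om1x 0 s) - 2 * eps1 * J1 s)) (at s)"
        unfolding I1_def J1_def
        by (rule energy_deriv[OF c1 _ cc1 cc3 cc5]) (use D pde bc1 s in auto)
      have d2: "(I2 has_real_derivative (- 2 * eps2 * (Om2 0 s * Om2x 0 s) - 2 * eps2 * J2 s)) (at s)"
        unfolding I2_def J2_def
        by (rule energy_deriv[OF c2 _ cc2 cc4 cc6]) (use D pde bc1 s in auto)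
      have zs: "(Z has_vector_derivative Zp s) (at s)"
      proof -
        have "(Z has_vector_derivative Zp s) (at s within {t0..})" using Zd s unfolding Zp_def by auto
        moreover have "at s within {t0..} = at s" using s by (intro at_within_interior) simp
        ultimately show ?thesis by simp
      qed
      have dq: "((\<lambda>s. Bf (Z s) (Z s)) has_real_derivative (Bf (Z s) (Zp s) + Bf (Zp s) (Z s))) (at s)"
        using bounded_bilinear.has_vector_derivative[OF bb zs zs]
        by (simp add: has_real_derivative_iff_has_vector_derivative)
      have "((\<lambda>s. Kc * (I1 s + w * I2 s) + Bf (Z s) (Z s)) has_real_derivative W' s) (at s)"
        unfolding W'_def by (intro DERIV_add DERIV_cmult d1 d2 dq)
      thus ?thesis unfolding W_def .
    qed
    have ineq: "W' s \<le> - c * W s" if s: "s > t0" for s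
    proof -
      have s0: "s \<ge> t0" using s by simp
      define u where "u = Om1 0 s"
      have u_eq: "theta * Om1 0 s + (1 - theta) * Om2 0 s = u" unfolding u_def using bc0 s
        by (simp add: algebra_simps)
      have bcz: "eps1 * (Om1 0 s * Om1x 0 s) + w * (eps2 * (Om2 0 s * Om2x 0 s)) = 0"
      proof -
        have "Om1x 0 s = - a * Om2x 0 s" "Om2 0 s = Om1 0 s" using bc0 s by (auto simp: algebra_simps)
        hence "eps1 * (Om1 0 s * Om1x 0 s) + w * (eps2 * (Om2 0 s * Om2x 0 s))
             = Om1 0 s * Om2x 0 s * (w * eps2 - a * eps1)" by (simp add: algebra_simps)
        thus ?thesis using bal by simp
      qed
      have dV: "Kc * ((- 2 * eps1 * (Om1 0 s * Om1x 0 s) - 2 * eps1 * J1 s)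
                        + w * (- 2 * eps2 * (Om2 0 s * Om2x 0 s) - 2 * eps2 * J2 s))
              = - 2 * Kc * (eps1 * J1 s + w * eps2 * J2 s)"
      proof -
        have "Kc * ((- 2 * eps1 * (Om1 0 s * Om1x 0 s) - 2 * eps1 * J1 s)
                        + w * (- 2 * eps2 * (Om2 0 s * Om2x 0 s) - 2 * eps2 * J2 s))
             = - 2 * Kc * (eps1 * J1 s + w * eps2 * J2 s)
               - 2 * Kc * (eps1 * (Om1 0 s * Om1x 0 s) + w * (eps2 * (Om2 0 s * Om2x 0 s)))"
          by (simp add: algebra_simps)
        thus ?thesis unfolding bcz by simp
      qed
      have dVle: "eps1 * J1 s + w * eps2 * J2 s \<ge> e0 * (J1 s + J2 s)"
      proof -
        have "e0 * J1 s \<le> eps1 * J1 s" unfolding e0_def using J1nn[OF s] by (simp add: mult_right_mono)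
        moreover have "e0 * J2 s \<le> (w * eps2) * J2 s" unfolding e0_def using J2nn[OF s] by (simp add: mult_right_mono)
        ultimately show ?thesis by (simp add: algebra_simps)
      qed
      have Zps: "Zp s = Mm *v Z s + u *\<^sub>R B" unfolding Zp_def u_eq ..
      have dq: "Bf (Z s) (Zp s) + Bf (Zp s) (Z s) = 2 * Bf (Z s) (Mm *v Z s) + 2 * u * Bf (Z s) B"
        unfolding Zps using bounded_bilinear.add_right[OF bb] bounded_bilinear.scaleR_right[OF bb] sym
        by (simp add: sym[of "Mm *v Z s + u *\<^sub>R B"])
      have k1: "2 * Bf (Z s) (Mm *v Z s) \<le> - (norm (Z s) ^ 2) / h"
        using key[of "Z s"] h0 by (simp add: field_simps)
      have k2: "2 * u * Bf (Z s) B \<le> (norm (Z s))^2 / (2 * h) + G * u^2"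
      proof -
        have "2 * u * Bf (Z s) B \<le> 2 * \<bar>u\<bar> * (K * norm (Z s) * norm B)"
        proof -
          have "2 * u * Bf (Z s) B \<le> \<bar>2 * u * Bf (Z s) B\<bar>" by simp
          also have "\<dots> = 2 * \<bar>u\<bar> * \<bar>Bf (Z s) B\<bar>" by (simp add: abs_mult)
          also have "\<dots> \<le> 2 * \<bar>u\<bar> * (K * norm (Z s) * norm B)" using bnd[of "Z s" B] by (simp add: mult_left_mono)
          finally show ?thesis .
        qed
        also have "\<dots> \<le> (norm (Z s))^2 / (2 * h) + G * u^2"
        proof -
          define p where "p = norm (Z s)"
          define q where "q = 2 * h * K * norm B * \<bar>u\<bar>"
          have "0 \<le> (p - q)^2 / (2 * h)" using h0 by simp
          also have "(p - q)^2 / (2 * h) = p^2 / (2 * h) - 2 * \<bar>u\<bar> * (K * p * norm B) + G * u^2"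
            unfolding q_def G_def using h0 by (simp add: power2_eq_square field_simps)
          finally show ?thesis unfolding p_def by simp
        qed
        finally show ?thesis .
      qed
      have u2: "u^2 \<le> 5 * J1 s"
      proof -
        have "(Om1 0 s)^2 \<le> 5 * integral {0..1} (\<lambda>x. (Om1x x s)^2)"
          by (rule poincare01(2)[of "\<lambda>y. Om1 y s" "\<lambda>x. Om1x x s"])
             (use D s bc1 in \<open>auto intro: cont_slice[OF cc1]\<close>)
        thus ?thesis unfolding u_def J1_def .
      qed
      have p1: "I1 s \<le> 4 * J1 s"
        unfolding I1_def J1_def
        by (rule poincare01(1)[of "\<lambda>y. Om1 y s" "\<lambda>x. Om1x x s"])
           (use D s bc1 in \<open>auto intro: cont_slice[OF cc1]\<close>)
      have p2: "I2 s \<le> 4 * J2 s"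
        unfolding I2_def J2_def
        by (rule poincare01(1)[of "\<lambda>y. Om2 y s" "\<lambda>x. Om2x x s"])
           (use D s bc1 in \<open>auto intro: cont_slice[OF cc2]\<close>)
      define N where "N = (norm (Z s))^2"
      have N0: "N \<ge> 0" unfolding N_def by simp
      have W'le: "W' s \<le> - Kc * e0 * (J1 s + J2 s) - N / (2 * h)"
      proof -
        have "W' s = - 2 * Kc * (eps1 * J1 s + w * eps2 * J2 s) + (2 * Bf (Z s) (Mm *v Z s) + 2 * u * Bf (Z s) B)"
          unfolding W'_def dV dq ..
        also have "\<dots> \<le> - 2 * Kc * (e0 * (J1 s + J2 s)) + (- N / h + (N / (2 * h) + G * u^2))"
          using dVle k1 k2 Kc1 unfolding N_def by (intro add_mono) (auto simp: mult_left_mono)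
        also have "\<dots> \<le> - 2 * Kc * (e0 * (J1 s + J2 s)) + (- N / h + (N / (2 * h) + G * (5 * J1 s)))"
          using u2 G0 by (simp add: mult_left_mono)
        also have "\<dots> \<le> - Kc * e0 * (J1 s + J2 s) - N / (2 * h)"
        proof -
          have "5 * G * J1 s \<le> Kc * e0 * (J1 s + J2 s)"
            unfolding Kce using J1nn[OF s] J2nn[OF s] e00 G0
            by (simp add: algebra_simps add_nonneg_nonneg mult_nonneg_nonneg)
          moreover have "- N / h + N / (2 * h) = - N / (2 * h)" using h0 by (simp add: field_simps)
          ultimately show ?thesis by (simp add: algebra_simps)
        qed
        finally show ?thesis .
      qed
      have "- Kc * e0 * (J1 s + J2 s) \<le> - Kc * e0 / 4 * (I1 s + I2 s)"
      proof -
        have "I1 s + I2 s \<le> 4 * (J1 s + J2 s)" using p1 p2 by simp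
        hence "Kc * e0 / 4 * (I1 s + I2 s) \<le> Kc * e0 / 4 * (4 * (J1 s + J2 s))"
          using Kc1 e00 by (intro mult_left_mono) auto
        thus ?thesis by (simp add: algebra_simps)
      qed
      moreover have "c * W s \<le> Kc * e0 / 4 * (I1 s + I2 s) + N / (2 * h)"
      proof -
        have Bz: "Bf (Z s) (Z s) \<le> K * N" using bnd[of "Z s" "Z s"] unfolding N_def by (simp add: power2_eq_square mult.assoc)
        have Bz0: "0 \<le> Bf (Z s) (Z s)" using low[of "Z s"] by (smt (verit) zero_le_power2)
        have V0: "0 \<le> I1 s + w * I2 s" using I1nn[OF s0] I2nn[OF s0] w1 by simp
        have "c * W s = c * Kc * (I1 s + w * I2 s) + c * Bf (Z s) (Z s)" unfolding W_def by (simp add: algebra_simps)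
        also have "c * Kc * (I1 s + w * I2 s) \<le> (e0 / (4 * w)) * Kc * (w * (I1 s + I2 s))"
        proof -
          have "c * Kc * (I1 s + w * I2 s) \<le> (e0 / (4 * w)) * Kc * (I1 s + w * I2 s)"
            unfolding c_def using V0 Kc1 by (intro mult_right_mono) auto
          also have "\<dots> \<le> (e0 / (4 * w)) * Kc * (w * (I1 s + I2 s))"
            using e00 w1 Kc1 I1nn[OF s0] by (intro mult_left_mono) (auto simp: algebra_simps mult_le_cancel_right1)
          finally show ?thesis .
        qed
        also have "(e0 / (4 * w)) * Kc * (w * (I1 s + I2 s)) = Kc * e0 / 4 * (I1 s + I2 s)" using w1 by simp
        also have "c * Bf (Z s) (Z s) \<le> (1 / (2 * h * K)) * (K * N)"
          unfolding c_def using Bz Bz0 c0 by (intro mult_mono) (auto simp: c_def)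
        also have "(1 / (2 * h * K)) * (K * N) = N / (2 * h)" using K0 by simp
        finally show ?thesis by simp
      qed
      ultimately show ?thesis using W'le by linarith
    qed
    have gw: "W t \<le> exp (- c * (t - t0)) * W t0"
      by (rule gronwall_exp[OF contW derW ineq t])
    have "Sq t \<le> hi * exp (- c * (t - t0)) * Sq t0"
    proof -
      have "Sq t \<le> W t" by (rule Wlo[OF t])
      also have "\<dots> \<le> exp (- c * (t - t0)) * W t0" by (rule gw)
      also have "\<dots> \<le> exp (- c * (t - t0)) * (hi * Sq t0)" by (intro mult_left_mono Whi) auto
      finally show ?thesis by (simp add: mult_ac)
    qed
    hence "sqrt (Sq t) \<le> sqrt hi * sqrt (exp (- c * (t - t0))) * sqrt (Sq t0)"
      by (simp add: real_sqrt_mult[symmetric])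
    moreover have "sqrt (exp (- c * (t - t0))) = exp (- (c / 2) * (t - t0))"
      by (rule real_sqrt_unique) (simp_all add: power2_eq_square exp_add[symmetric])
    ultimately show "state_norm Om1 Om2 Z t \<le> sqrt hi * exp (- (c / 2) * (t - t0)) * state_norm Om1 Om2 Z t0"
      using sn[OF t] sn[of t0] by simp
  qed
qed

end
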